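(* Let $\Delta_{\mu,\nu}(x)=[\tilde{t}_{\mu,\nu}(x)]^2-\tilde{t}_{\mu-1,\nu-1}(x)\tilde{t}_{\mu+1,\nu+1}(x)$. Suppose that $\mu>-3$ and $|\nu|<\mu+3$. Then, for all $x>0$, $$0<\frac{2(\frac{1}{2}x)^{2\mu+2}}{(\mu+\nu+3)\big[\Gamma(\frac{\mu-\nu+3}{2})\Gamma(\frac{\mu+\nu+3}{2})\big]^2}\leq\Delta_{\mu,\nu}(x)\leq\frac{2[\tilde{t}_{\mu,\nu}(x)]^2}{\mu+\nu+3}.$$
   Context: For real $\mu,\nu$ the (normalized) modified Lommel function of the first kind is $$\tilde{t}_{\mu,\nu}(x)=\sum_{k=0}^\infty\frac{(\frac{1}{2}x)^{\mu+2k+1}}{\Gamma\big(k+\frac{\mu-\nu+3}{2}\big)\Gamma\big(k+\frac{\mu+\nu+3}{2}\big)},\quad x>0.$$ *)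

theory Defs
  imports "HOL-Analysis.Analysis"
begin

text \<open>At poles of Gamma, Isabelle's Gamma is 0 and division by 0 yields 0, which agrees
  with the standard convention 1/Gamma = 0 there.\<close>
definition lommel_t :: "real \<Rightarrow> real \<Rightarrow> real \<Rightarrow> real" where
  "lommel_t mu nu x =
     (\<Sum>k. (x / 2) powr (mu + 2 * real k + 1) /
            (Gamma (real k + (mu - nu + 3) / 2) * Gamma (real k + (mu + nu + 3) / 2)))"

definition lommel_Delta :: "real \<Rightarrow> real \<Rightarrow> real \<Rightarrow> real" where
  "lommel_Delta mu nu x =
     (lommel_t mu nu x)^2 - lommel_t (mu - 1) (nu - 1) x * lommel_t (mu + 1) (nu + 1) x"

end

theory Submission
  imports Defs
begin

definition Tm :: "(nat \<Rightarrow> real) \<Rightarrow> real \<Rightarrow> nat \<Rightarrow> nat \<Rightarrow> real" where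
  "Tm c b n i = c i * c (n - i) * (1 - (real i + b - 1) / (real (n - i) + b))"

lemma pair_nonneg:
  fixes c :: "nat \<Rightarrow> real" and a b :: real
  assumes a: "a > 0" and b: "b > 0" and cpos: "\<And>k. c k > 0"
    and rec: "\<And>k. c (Suc k) = c k / ((real k + a) * (real k + b))"
  shows "0 \<le> c (Suc p) * c q * (1 - (real p + b) / (real q + b))
            + c (Suc q) * c p * (1 - (real q + b) / (real p + b))"
proof -
  have pa: "real p + a > 0" "real q + a > 0" "real p + b > 0" "real q + b > 0" using a b by auto
  have eq: "c (Suc p) * c q * (1 - (real p + b) / (real q + b))
            + c (Suc q) * c p * (1 - (real q + b) / (real p + b))
         = c p * c q * (real q - real p)^2 / ((real p + a) * (real q + a) * (real p + b) * (real q + b))"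
    unfolding rec using pa by (simp add: divide_simps power2_eq_square) (simp add: algebra_simps)
  show ?thesis unfolding eq using pa cpos[of p] cpos[of q] by (intro divide_nonneg_pos) auto
qed

lemma S_nonneg:
  fixes c :: "nat \<Rightarrow> real" and a b :: real
  assumes a: "a > 0" and b: "b > 0" and cpos: "\<And>k. c k > 0"
    and rec: "\<And>k. c (Suc k) = c k / ((real k + a) * (real k + b))"
  shows "0 \<le> (\<Sum>i\<le>n. Tm c b n i)"
proof -
  have split: "(\<Sum>i\<le>n. Tm c b n i) = Tm c b n 0 + (\<Sum>p<n. Tm c b n (Suc p))"
  proof (cases n)
    case (Suc m)
    show ?thesis unfolding Suc sum.atMost_Suc_shift lessThan_Suc_atMost by simp
  qed simp
  have t0: "Tm c b n 0 \<ge> 0" unfolding Tm_def using cpos[of 0] cpos[of n] b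
    by (intro mult_nonneg_nonneg) (auto simp: field_simps)
  have rev: "(\<Sum>p<n. Tm c b n (Suc p)) = (\<Sum>p<n. Tm c b n (Suc (n - Suc p)))"
    using sum.nat_diff_reindex[of "\<lambda>p. Tm c b n (Suc p)" n] by simp
  have "2 * (\<Sum>p<n. Tm c b n (Suc p)) = (\<Sum>p<n. Tm c b n (Suc p) + Tm c b n (n - p))"
    using rev by (simp add: sum.distrib Suc_diff_Suc)
  also have "\<dots> \<ge> 0"
  proof (intro sum_nonneg)
    fix p assume "p \<in> {..<n}"
    then have pn: "p < n" by simp
    define q where "q = n - Suc p"
    have n1: "n - Suc p = q" "n - (n - p) = p" "n - p = Suc q" "n - Suc q = p" using pn q_def by auto
    have r: "real (Suc p) + b - 1 = real p + b" "real (Suc q) + b - 1 = real q + b" by auto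
    show "0 \<le> Tm c b n (Suc p) + Tm c b n (n - p)"
      unfolding Tm_def n1 r using pair_nonneg[OF a b cpos rec, of p q] by simp
  qed
  finally show ?thesis using split t0 by linarith
qed

lemma S_upper:
  fixes c :: "nat \<Rightarrow> real" and b :: real
  assumes b: "b > 0" and cpos: "\<And>k. c k > 0"
  shows "(\<Sum>i\<le>n. Tm c b n i) \<le> (\<Sum>i\<le>n. c i * c (n - i)) / b"
proof -
  have rev: "(\<Sum>i\<le>n. Tm c b n i) = (\<Sum>i\<le>n. Tm c b n (n - i))"
    using sum.atLeastAtMost_rev[of "Tm c b n" 0 n] by (simp add: atLeast0AtMost)
  have "2 * (\<Sum>i\<le>n. Tm c b n i) = (\<Sum>i\<le>n. Tm c b n i + Tm c b n (n - i))"
    using rev by (simp add: sum.distrib)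
  also have "\<dots> \<le> (\<Sum>i\<le>n. 2 * (c i * c (n - i)) / b)"
  proof (intro sum_mono)
    fix i assume "i \<in> {..n}"
    then have inn: "i \<le> n" by simp
    define k where "k = real i"
    define l where "l = real (n - i)"
    have kl: "k \<ge> 0" "l \<ge> 0" unfolding k_def l_def by auto
    have nn: "n - (n - i) = i" using inn by simp
    have cc: "c (n - i) * c i = c i * c (n - i)" by simp
    have key: "(1 - (k + b - 1) / (l + b)) + (1 - (l + b - 1) / (k + b)) \<le> 2 / b"
    proof -
      have "(1 - (k + b - 1) / (l + b)) + (1 - (l + b - 1) / (k + b))
          = (k + l + 2 * b - (l - k)^2) / ((k + b) * (l + b))"
        using kl b by (simp add: field_simps power2_eq_square)
      also have "\<dots> \<le> 2 / b"
      proof -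
        have d: "(k + b) * (l + b) > 0" using kl b by simp
        have "b * (k + l + 2 * b - (l - k)^2) \<le> 2 * ((k + b) * (l + b))"
        proof -
          have "2 * ((k + b) * (l + b)) - b * (k + l + 2 * b - (l - k)^2)
                = 2 * k * l + b * (k + l) + b * (l - k)^2"
            by (simp add: algebra_simps power2_eq_square)
          also have "\<dots> \<ge> 0" using kl b by simp
          finally show ?thesis by linarith
        qed
        then show ?thesis using d b by (simp add: divide_simps mult.commute)
      qed
      finally show ?thesis .
    qed
    have cp: "c i * c (n - i) > 0" using cpos by simp
    have "Tm c b n i + Tm c b n (n - i) = c i * c (n - i) * ((1 - (k + b - 1) / (l + b)) + (1 - (l + b - 1) / (k + b)))"
      unfolding Tm_def nn k_def l_def by (simp add: algebra_simps)
    also have "\<dots> \<le> c i * c (n - i) * (2 / b)"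
      using key cp by (intro mult_left_mono) auto
    finally have "Tm c b n i + Tm c b n (n - i) \<le> c i * c (n - i) * (2 / b)" .
    moreover have "c i * c (n - i) * (2 / b) = 2 * (c i * c (n - i)) / b" by simp
    ultimately show "Tm c b n i + Tm c b n (n - i) \<le> 2 * (c i * c (n - i)) / b" by linarith
  qed
  also have "\<dots> = 2 * ((\<Sum>i\<le>n. c i * c (n - i)) / b)"
    by (simp add: sum_distrib_left sum_divide_distrib)
  finally show ?thesis by linarith
qed

lemma gamma_shift:
  fixes s g :: real
  assumes "s > -1"
  shows "1 / (g * Gamma s) = s / (g * Gamma (s + 1))"
proof (cases "s = 0")
  case True then show ?thesis by simp
next
  case False
  have "s \<notin> \<int>\<^sub>\<le>\<^sub>0"
  proof
    assume "s \<in> \<int>\<^sub>\<le>\<^sub>0"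
    then obtain n where n: "s = of_int n" "n \<le> 0" by (elim nonpos_Ints_cases)
    then have "real_of_int n > -1" using assms by simp
    then have "n > -1" by linarith
    with n False show False by auto
  qed
  then have "Gamma (s + 1) = s * Gamma s" by (rule Gamma_plus1)
  then show ?thesis using False by (simp add: field_simps)
qed

lemma gamma_rec:
  fixes s :: real
  assumes "s > 0"
  shows "Gamma (s + 1) = s * Gamma s"
proof -
  have "s \<notin> \<int>\<^sub>\<le>\<^sub>0" using assms nonpos_Ints_nonpos by force
  then show ?thesis by (rule Gamma_plus1)
qed

theorem theorem3p4:
  fixes mu nu x :: real
  assumes "mu > -3" and "\<bar>nu\<bar> < mu + 3" and "x > 0"
  shows "0 < 2 * (x / 2) powr (2 * mu + 2) /
               ((mu + nu + 3) * (Gamma ((mu - nu + 3) / 2) * Gamma ((mu + nu + 3) / 2))^2)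
       \<and> 2 * (x / 2) powr (2 * mu + 2) /
               ((mu + nu + 3) * (Gamma ((mu - nu + 3) / 2) * Gamma ((mu + nu + 3) / 2))^2)
           \<le> lommel_Delta mu nu x
       \<and> lommel_Delta mu nu x \<le> 2 * (lommel_t mu nu x)^2 / (mu + nu + 3)"
proof -
  define a where "a = (mu - nu + 3) / 2"
  define b where "b = (mu + nu + 3) / 2"
  define y where "y = x / 2"
  define z where "z = y ^ 2"
  define c where "c k = 1 / (Gamma (real k + a) * Gamma (real k + b))" for k
  have a: "a > 0" and b: "b > 0" using assms(2) unfolding a_def b_def by auto
  have y: "y > 0" using assms(3) unfolding y_def by simp
  have z: "z > 0" using y unfolding z_def by simp
  have Ga: "Gamma (real k + a) > 0" for k using a by (intro Gamma_real_pos) auto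
  have Gb: "Gamma (real k + b) > 0" for k using b by (intro Gamma_real_pos) auto
  have cpos: "c k > 0" for k unfolding c_def using Ga[of k] Gb[of k] by simp
  have rec: "c (Suc k) = c k / ((real k + a) * (real k + b))" for k
  proof -
    have e: "real (Suc k) + a = (real k + a) + 1" "real (Suc k) + b = (real k + b) + 1" by auto
    have "Gamma (real (Suc k) + a) = (real k + a) * Gamma (real k + a)"
      unfolding e using a by (intro gamma_rec) simp
    moreover have "Gamma (real (Suc k) + b) = (real k + b) * Gamma (real k + b)"
      unfolding e using b by (intro gamma_rec) simp
    ultimately show ?thesis unfolding c_def by (simp add: field_simps)
  qed
  have pw: "(x / 2) powr (r + 2 * real k) = y powr r * z ^ k" for r k
  proof -
    have "(x / 2) powr (r + 2 * real k) = y powr r * y powr (real (2 * k))"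
      unfolding y_def by (simp add: powr_add)
    also have "y powr (real (2 * k)) = z ^ k" using powr_realpow[OF y, of "2 * k"] unfolding z_def
      by (metis power_mult)
    finally show ?thesis .
  qed
  have sA: "summable (\<lambda>k. c k * z ^ k)"
  proof (rule summable_ratio_test[where c = "1/2" and N = "nat \<lceil>2 * z\<rceil> + 1"])
    fix n assume n: "nat \<lceil>2 * z\<rceil> + 1 \<le> n"
    have n1: "real n \<ge> 1" using n by simp
    have "2 * z \<le> real n" using n by linarith
    also have "real n \<le> real n * real n" using n1 by (simp add: mult_le_cancel_left1)
    also have "\<dots> \<le> (real n + a) * (real n + b)" using a b n1 by (intro mult_mono) auto
    finally have le: "2 * z \<le> (real n + a) * (real n + b)" .
    have pp: "(real n + a) * (real n + b) > 0" using a b by simp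
    have e: "c (Suc n) * z ^ Suc n = (c n * z ^ n) * (z / ((real n + a) * (real n + b)))"
      unfolding rec by (simp add: field_simps)
    have q: "z / ((real n + a) * (real n + b)) \<le> 1/2" using le pp by (simp add: divide_simps)
    have p0: "c n * z ^ n > 0" using cpos[of n] z by simp
    have p1: "c (Suc n) * z ^ Suc n > 0" using cpos[of "Suc n"] z by simp
    have "(c n * z ^ n) * (z / ((real n + a) * (real n + b))) \<le> (c n * z ^ n) * (1/2)"
      using q p0 by (intro mult_left_mono) auto
    moreover have "norm (c (Suc n) * z ^ Suc n) = c (Suc n) * z ^ Suc n"
      using p1 by (simp only: real_norm_def abs_of_pos)
    moreover have "norm (c n * z ^ n) = c n * z ^ n"
      using p0 by (simp only: real_norm_def abs_of_pos)
    ultimately show "norm (c (Suc n) * z ^ Suc n) \<le> 1/2 * norm (c n * z ^ n)"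
      using e by (simp only: mult.commute)
  qed simp
  have sE: "summable (\<lambda>k. c k / (real k + b) * z ^ k)"
  proof (rule summable_comparison_test'[OF summable_mult[OF sA, of "1/b"]])
    fix n :: nat
    have "c n * z ^ n / (real n + b) \<le> c n * z ^ n / b" using b cpos[of n] z
      by (intro divide_left_mono) auto
    then show "norm (c n / (real n + b) * z ^ n) \<le> 1 / b * (c n * z ^ n)"
      using cpos[of n] z b by (simp add: mult_right_mono)
  qed
  have sD: "summable (\<lambda>k. norm ((real k + b - 1) * c k * z ^ k))"
  proof -
    have "summable (\<lambda>k. norm ((real (Suc k) + b - 1) * c (Suc k) * z ^ Suc k))"
    proof (rule summable_comparison_test'[OF summable_mult[OF sA, of "z/a"]])
      fix n :: nat
      have e: "(real (Suc n) + b - 1) * c (Suc n) * z ^ Suc n = (c n * z ^ n) * (z / (real n + a))"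
      proof -
        have "real n + a > 0" "real n + b > 0" using a b by auto
        moreover have e: "real (Suc n) + b - 1 = real n + b" by simp
        ultimately show ?thesis unfolding rec e by (simp add: divide_simps)
      qed
      have "z / (real n + a) \<le> z / a" using a z by (intro divide_left_mono) auto
      moreover have p0: "c n * z ^ n > 0" using cpos[of n] z by simp
      ultimately have q: "(c n * z ^ n) * (z / (real n + a)) \<le> (c n * z ^ n) * (z / a)"
        by (intro mult_left_mono) auto
      have "(c n * z ^ n) * (z / (real n + a)) \<ge> 0" using p0 z a by simp
      then have "\<bar>(c n * z ^ n) * (z / (real n + a))\<bar> = (c n * z ^ n) * (z / (real n + a))"
        by (simp only: abs_of_nonneg)
      then show "norm (norm ((real (Suc n) + b - 1) * c (Suc n) * z ^ Suc n)) \<le> z / a * (c n * z ^ n)"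
        unfolding real_norm_def abs_abs e using q by (simp only: mult.commute)
    qed
    then show ?thesis by (rule iffD1[OF summable_Suc_iff])
  qed
  define A where "A = (\<Sum>k. c k * z ^ k)"
  define D where "D = (\<Sum>k. (real k + b - 1) * c k * z ^ k)"
  define E where "E = (\<Sum>k. c k / (real k + b) * z ^ k)"
  have sD': "summable (\<lambda>k. (real k + b - 1) * c k * z ^ k)"
    by (rule summable_norm_cancel[OF sD])
  have tA: "lommel_t mu nu x = y powr (mu + 1) * A"
  proof -
    have "lommel_t mu nu x = (\<Sum>k. y powr (mu + 1) * (c k * z ^ k))"
      unfolding lommel_t_def
    proof (rule arg_cong[where f = suminf], rule ext)
      fix k
      have e1: "mu + 2 * real k + 1 = (mu + 1) + 2 * real k" by simp
      show "(x / 2) powr (mu + 2 * real k + 1) /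
          (Gamma (real k + (mu - nu + 3) / 2) * Gamma (real k + (mu + nu + 3) / 2))
          = y powr (mu + 1) * (c k * z ^ k)"
        unfolding c_def a_def[symmetric] b_def[symmetric] e1 pw by simp
    qed
    then show ?thesis unfolding A_def using suminf_mult[OF sA] by simp
  qed
  have tD: "lommel_t (mu - 1) (nu - 1) x = y powr mu * D"
  proof -
    have "lommel_t (mu - 1) (nu - 1) x = (\<Sum>k. y powr mu * ((real k + b - 1) * c k * z ^ k))"
      unfolding lommel_t_def
    proof (rule arg_cong[where f = suminf], rule ext)
      fix k
      have e1: "mu - 1 + 2 * real k + 1 = mu + 2 * real k" by simp
      have e2: "(mu - 1 - (nu - 1) + 3) / 2 = a" "(mu - 1 + (nu - 1) + 3) / 2 = b - 1"
        unfolding a_def b_def by (simp_all add: field_simps)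
      have g: "1 / (Gamma (real k + a) * Gamma (real k + b - 1)) = (real k + b - 1) * c k"
        using gamma_shift[of "real k + b - 1" "Gamma (real k + a)"] b unfolding c_def by simp
      show "(x / 2) powr (mu - 1 + 2 * real k + 1) /
          (Gamma (real k + (mu - 1 - (nu - 1) + 3) / 2) * Gamma (real k + (mu - 1 + (nu - 1) + 3) / 2))
          = y powr mu * ((real k + b - 1) * c k * z ^ k)"
        unfolding e1 e2 pw using g
        by (metis (no_types, lifting) add_diff_eq divide_inverse mult.assoc mult.commute mult_1)
    qed
    then show ?thesis unfolding D_def using suminf_mult[OF sD'] by simp
  qed
  have tE: "lommel_t (mu + 1) (nu + 1) x = y powr (mu + 2) * E"
  proof -
    have "lommel_t (mu + 1) (nu + 1) x = (\<Sum>k. y powr (mu + 2) * (c k / (real k + b) * z ^ k))"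
      unfolding lommel_t_def
    proof (rule arg_cong[where f = suminf], rule ext)
      fix k
      have e1: "mu + 1 + 2 * real k + 1 = (mu + 2) + 2 * real k" by simp
      have e2: "(mu + 1 - (nu + 1) + 3) / 2 = a" "(mu + 1 + (nu + 1) + 3) / 2 = b + 1"
        unfolding a_def b_def by (simp_all add: field_simps)
      have g: "Gamma (real k + (b + 1)) = (real k + b) * Gamma (real k + b)"
        using gamma_rec[of "real k + b"] b by (simp add: add.assoc)
      show "(x / 2) powr (mu + 1 + 2 * real k + 1) /
          (Gamma (real k + (mu + 1 - (nu + 1) + 3) / 2) * Gamma (real k + (mu + 1 + (nu + 1) + 3) / 2))
          = y powr (mu + 2) * (c k / (real k + b) * z ^ k)"
        unfolding e1 e2 pw g c_def by (simp add: field_simps)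
    qed
    then show ?thesis unfolding E_def using suminf_mult[OF sE] by simp
  qed
  have nA: "(\<lambda>k. norm (c k * z ^ k)) = (\<lambda>k. c k * z ^ k)"
  proof (rule ext)
    fix k show "norm (c k * z ^ k) = c k * z ^ k" using cpos[of k] z by simp
  qed
  have nE: "(\<lambda>k. norm (c k / (real k + b) * z ^ k)) = (\<lambda>k. c k / (real k + b) * z ^ k)"
  proof (rule ext)
    fix k show "norm (c k / (real k + b) * z ^ k) = c k / (real k + b) * z ^ k"
      using cpos[of k] z b by simp
  qed
  have sAn: "summable (\<lambda>k. norm (c k * z ^ k))" unfolding nA by (rule sA)
  have sEn: "summable (\<lambda>k. norm (c k / (real k + b) * z ^ k))" unfolding nE by (rule sE)
  define CA where "CA n = (\<Sum>i\<le>n. (c i * z ^ i) * (c (n - i) * z ^ (n - i)))" for n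
  define CD where "CD n = (\<Sum>i\<le>n. ((real i + b - 1) * c i * z ^ i) *
                       (c (n - i) / (real (n - i) + b) * z ^ (n - i)))" for n
  have hCA: "CA sums (A * A)" unfolding CA_def A_def by (rule Cauchy_product_sums[OF sAn sAn])
  have hCD: "CD sums (D * E)" unfolding CD_def D_def E_def by (rule Cauchy_product_sums[OF sD sEn])
  have CAe: "CA n = z ^ n * (\<Sum>i\<le>n. c i * c (n - i))" for n
    unfolding CA_def sum_distrib_left
  proof (rule sum.cong[OF refl])
    fix i assume "i \<in> {..n}"
    then have "z ^ i * z ^ (n - i) = z ^ n" by (simp add: power_add[symmetric])
    then show "c i * z ^ i * (c (n - i) * z ^ (n - i)) = z ^ n * (c i * c (n - i))"
      by (metis mult.assoc mult.commute mult.left_commute)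
  qed
  have CDe: "CA n - CD n = z ^ n * (\<Sum>i\<le>n. Tm c b n i)" for n
    unfolding CA_def CD_def sum_distrib_left sum_subtractf[symmetric]
  proof (rule sum.cong[OF refl])
    fix i assume "i \<in> {..n}"
    then have zz: "z ^ i * z ^ (n - i) = z ^ n" by (simp add: power_add[symmetric])
    have nb: "real (n - i) + b \<noteq> 0" using b by simp
    have "c i * z ^ i * (c (n - i) * z ^ (n - i)) - (real i + b - 1) * c i * z ^ i * (c (n - i) / (real (n - i) + b) * z ^ (n - i))
        = (z ^ i * z ^ (n - i)) * (c i * c (n - i) * (1 - (real i + b - 1) / (real (n - i) + b)))"
      using nb by (simp add: field_simps)
    then show "c i * z ^ i * (c (n - i) * z ^ (n - i)) - (real i + b - 1) * c i * z ^ i * (c (n - i) / (real (n - i) + b) * z ^ (n - i))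
        = z ^ n * Tm c b n i" unfolding Tm_def zz .
  qed
  have hdiff: "(\<lambda>n. CA n - CD n) sums (A * A - D * E)" by (rule sums_diff[OF hCA hCD])
  have nonneg: "0 \<le> CA n - CD n" for n
    unfolding CDe using S_nonneg[OF a b cpos rec, where n = n] z by simp
  have low: "(c 0)^2 / b \<le> A * A - D * E"
  proof -
    have "sum (\<lambda>n. CA n - CD n) {0} \<le> (\<Sum>n. CA n - CD n)"
      by (rule sum_le_suminf[OF sums_summable[OF hdiff]]) (use nonneg in auto)
    moreover have "sum (\<lambda>n. CA n - CD n) {0} = (c 0)^2 / b"
      unfolding CDe using b by (simp add: Tm_def power2_eq_square field_simps)
    ultimately show ?thesis using sums_unique[OF hdiff] by simp
  qed
  have up: "A * A - D * E \<le> A * A / b"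
  proof -
    have hCAb: "(\<lambda>n. CA n / b) sums (A * A / b)" by (rule sums_divide[OF hCA])
    have "(\<Sum>n. CA n - CD n) \<le> (\<Sum>n. CA n / b)"
    proof (rule suminf_le[OF _ sums_summable[OF hdiff] sums_summable[OF hCAb]])
      fix n
      have "z ^ n * (\<Sum>i\<le>n. Tm c b n i) \<le> z ^ n * ((\<Sum>i\<le>n. c i * c (n - i)) / b)"
        using S_upper[OF b cpos, where n = n] z by (intro mult_left_mono) auto
      moreover have "CA n - CD n = z ^ n * (\<Sum>i\<le>n. Tm c b n i)" by (rule CDe)
      moreover have "CA n / b = z ^ n * ((\<Sum>i\<le>n. c i * c (n - i)) / b)" by (simp add: CAe)
      ultimately show "CA n - CD n \<le> CA n / b" by linarith
    qed
    then show ?thesis using sums_unique[OF hdiff] sums_unique[OF hCAb] by simp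
  qed
  define Y where "Y = y powr (2 * mu + 2)"
  have Ypos: "Y > 0" unfolding Y_def using y by simp
  have Y1: "y powr (mu + 1) * y powr (mu + 1) = Y" unfolding Y_def
    by (simp add: powr_add[symmetric])
  have Y2: "y powr mu * y powr (mu + 2) = Y" unfolding Y_def
    by (simp add: powr_add[symmetric])
  have Delta: "lommel_Delta mu nu x = Y * (A * A - D * E)"
  proof -
    have "lommel_Delta mu nu x = (y powr (mu + 1) * y powr (mu + 1)) * (A * A) - (y powr mu * y powr (mu + 2)) * (D * E)"
      unfolding lommel_Delta_def tA tD tE by (simp add: power2_eq_square algebra_simps)
    then show ?thesis unfolding Y1 Y2 by (simp add: algebra_simps)
  qed
  have tsq: "2 * (lommel_t mu nu x)^2 / (mu + nu + 3) = Y * (A * A / b)"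
  proof -
    have "(lommel_t mu nu x)^2 = (y powr (mu + 1) * y powr (mu + 1)) * (A * A)"
      unfolding tA by (simp add: power2_eq_square algebra_simps)
    moreover have "mu + nu + 3 = 2 * b" unfolding b_def by simp
    ultimately show ?thesis unfolding Y1 using b by simp
  qed
  have L: "2 * (x / 2) powr (2 * mu + 2) /
               ((mu + nu + 3) * (Gamma ((mu - nu + 3) / 2) * Gamma ((mu + nu + 3) / 2))^2)
         = Y * ((c 0)^2 / b)"
  proof -
    have "mu + nu + 3 = 2 * b" unfolding b_def by simp
    moreover have "c 0 = 1 / (Gamma a * Gamma b)" unfolding c_def by simp
    ultimately show ?thesis unfolding Y_def y_def a_def[symmetric] b_def[symmetric]
      by (simp add: power2_eq_square field_simps)
  qed
  have c0: "(c 0)^2 / b > 0" using cpos[of 0] b by simp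
  have g1: "0 < Y * ((c 0)^2 / b)" by (rule mult_pos_pos[OF Ypos c0])
  have g2: "Y * ((c 0)^2 / b) \<le> Y * (A * A - D * E)"
    by (rule mult_left_mono[OF low]) (use Ypos in simp)
  have g3: "Y * (A * A - D * E) \<le> Y * (A * A / b)"
    by (rule mult_left_mono[OF up]) (use Ypos in simp)
  show ?thesis unfolding L Delta tsq using g1 g2 g3 by blast
qed

end
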